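(* Let $\Omega>0$, $M\ge 2$, $\omega_q=-\Omega+(q-1)\frac{2\Omega}{M-1}$ for $q=1,\dots,M$. For given $0<\sigma<m_{\min}$ and integer $n\geq 2$, let $$\tau=\frac{0.49e^{-3/2}}{\Omega}\Big(\frac{\sigma}{m_{\min}}\Big)^{\frac{1}{2n-1}}.$$ Then there exist a measure $\mu=\sum_{j=1}^n a_j\delta_{y_j}$ with supports $\{-\tau,-2\tau,\dots,-n\tau\}$ and a measure $\hat\mu=\sum_{j=1}^n\hat a_j\delta_{\hat y_j}$ with supports $\{0,\tau,\dots,(n-1)\tau\}$ such that $\|[\hat\mu]-[\mu]\|_\infty<\sigma$ and either $\min_{1\le j\le n}|a_j|=m_{\min}$ or $\min_{1\le j\le n}|\hat a_j|=m_{\min}$.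
   Context: For a discrete measure $\nu=\sum_j b_j\delta_{x_j}$ on $\mathbb R$, $\mathcal F\nu(\omega)=\sum_j b_je^{ix_j\omega}$ and $[\nu]=(\mathcal F\nu(\omega_1),\dots,\mathcal F\nu(\omega_M))^T\in\mathbb C^M$. *)

theory Defs
  imports "HOL-Analysis.Analysis"
begin

definition dm_fourier :: "nat \<Rightarrow> (nat \<Rightarrow> complex) \<Rightarrow> (nat \<Rightarrow> real) \<Rightarrow> real \<Rightarrow> complex" where
  "dm_fourier n b x w = (\<Sum>j=1..n. b j * exp (\<i> * complex_of_real (x j * w)))"

definition meas_dist_inf ::
  "nat \<Rightarrow> (nat \<Rightarrow> real) \<Rightarrow> nat \<Rightarrow> (nat \<Rightarrow> complex) \<Rightarrow> (nat \<Rightarrow> real)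
     \<Rightarrow> (nat \<Rightarrow> complex) \<Rightarrow> (nat \<Rightarrow> real) \<Rightarrow> real" where
  "meas_dist_inf M w n b x b' x' =
     Max ((\<lambda>q. cmod (dm_fourier n b x (w q) - dm_fourier n b' x' (w q))) ` {1..M})"

end

theory Submission imports Defs begin
lemma r1: "(\<Sum>j=1..(n::nat). f (n+j-1)) = (\<Sum>k=n..<2*n. (f k::complex))"
proof -
  have "(\<Sum>j=1..(n::nat). f (n+j-1)) = (\<Sum>j<n. f (j+n))"
    by (rule sum.reindex_bij_witness[of _ "\<lambda>j. j+1" "\<lambda>j. j - 1"]) (auto simp: add.commute)
  also have "\<dots> = (\<Sum>k=n..<2*n. f k)"
    by (rule sum.reindex_bij_witness[of _ "\<lambda>k. k - n" "\<lambda>j. j + n"]) auto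
  finally show ?thesis .
qed
lemma r2: "(\<Sum>j=1..(n::nat). f (n-j)) = (\<Sum>k<n. (f k::complex))"
    by (rule sum.reindex_bij_witness[of _ "\<lambda>k. n - k" "\<lambda>j. n - j"]) auto
lemma r3: "(n::nat) \<ge> 1 \<Longrightarrow> (\<Sum>k\<le>2*n-1. (f k::complex)) = (\<Sum>k<n. f k) + (\<Sum>k=n..<2*n. f k)"
proof -
  assume "n\<ge>1"
  hence "{..2*n-1} = {..<n} \<union> {n..<2*n}" by auto
  thus ?thesis by (simp add: sum.union_disjoint[symmetric] ivl_disj_int)
qed
lemma sinb: "cmod (1 - exp (\<i> * complex_of_real t)) \<le> \<bar>t\<bar>"
proof -
  have "cmod (1 - exp (\<i> * complex_of_real t)) = cmod (exp (\<i> * complex_of_real t) - 1)"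
    by (simp add: norm_minus_commute)
  also have "\<dots> = 2 * \<bar>sin (t/2)\<bar>" by (rule dist_exp_i_1)
  also have "\<dots> \<le> 2 * \<bar>t/2\<bar>" using abs_sin_x_le_abs_x[of "t/2"] by simp
  finally show ?thesis by simp
qed

lemma key:
  fixes z m :: complex and n :: nat
  assumes z: "z \<noteq> 0" and n: "n \<ge> 1"
  defines "c \<equiv> (\<lambda>k. (-1)^k * of_nat ((2*n-1) choose k) :: complex)"
  shows "z^n * ((\<Sum>j=1..n. m * c (n+j-1) * z^(j-1)) - (\<Sum>j=1..n. (- m * c (n-j)) * inverse z ^ j))
         = m * (1 - z)^(2*n-1)"
proof -
  have A: "z^n * (\<Sum>j=1..n. m * c (n+j-1) * z^(j-1)) = m * (\<Sum>k=n..<2*n. c k * z^k)"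
  proof -
    have "z^n * (\<Sum>j=1..n. m * c (n+j-1) * z^(j-1)) = m * (\<Sum>j=1..n. c (n+j-1) * z^(n+j-1))"
      unfolding sum_distrib_left
      by (rule sum.cong) (auto simp: power_add[symmetric] algebra_simps)
    also have "\<dots> = m * (\<Sum>k=n..<2*n. c k * z^k)"
      using r1[of "\<lambda>k. c k * z^k" n] by simp
    finally show ?thesis .
  qed
  have B: "z^n * (\<Sum>j=1..n. (- m * c (n-j)) * inverse z ^ j) = - m * (\<Sum>k<n. c k * z^k)"
  proof -
    have "z^n * (\<Sum>j=1..n. (- m * c (n-j)) * inverse z ^ j) = - m * (\<Sum>j=1..n. c (n-j) * z^(n-j))"
      unfolding sum_distrib_left
    proof (rule sum.cong)
      fix j assume "j \<in> {1..n}"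
      hence "z^n = z^(n-j) * z^j" by (simp add: power_add[symmetric])
      thus "z ^ n * (- m * c (n - j) * inverse z ^ j) = - m * (c (n - j) * z ^ (n - j))"
        using z by (simp add: field_simps power_inverse)
    qed simp
    also have "\<dots> = - m * (\<Sum>k<n. c k * z^k)"
      using r2[of "\<lambda>k. c k * z^k" n] by simp
    finally show ?thesis .
  qed
  have C: "(1 - z)^(2*n-1) = (\<Sum>k\<le>2*n-1. c k * z^k)"
  proof -
    have "(1 - z)^(2*n-1) = (-z + 1)^(2*n-1)" by simp
    also have "\<dots> = (\<Sum>k\<le>2*n-1. of_nat ((2*n-1) choose k) * (-z)^k * 1^(2*n-1-k))"
      by (rule binomial_ring)
    also have "\<dots> = (\<Sum>k\<le>2*n-1. c k * z^k)"
      unfolding c_def power_minus[of z] by (simp add: mult_ac)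
    finally show ?thesis .
  qed
  show ?thesis
    unfolding right_diff_distrib A B C r3[OF n] by (simp add: algebra_simps)
qed

lemma omega_bound:
  fixes \<Omega> :: real and M q :: nat
  assumes "\<Omega> > 0" "M \<ge> 2" "q \<in> {1..M}"
  shows "\<bar>- \<Omega> + (real q - 1) * (2 * \<Omega> / (real M - 1))\<bar> \<le> \<Omega>"
proof -
  have M1: "real M - 1 > 0" using assms by simp
  have q0: "real q - 1 \<ge> 0" and q1: "real q - 1 \<le> real M - 1" using assms by auto
  have "0 \<le> (real q - 1) * (2 * \<Omega> / (real M - 1))"
    using q0 M1 assms(1) by simp
  moreover have "(real q - 1) * (2 * \<Omega> / (real M - 1)) \<le> (real M - 1) * (2 * \<Omega> / (real M - 1))"
    using q1 M1 assms(1) by (intro mult_right_mono) auto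
  moreover have "(real M - 1) * (2 * \<Omega> / (real M - 1)) = 2 * \<Omega>" using M1 by simp
  ultimately show ?thesis by linarith
qed

theorem proposition2p2:
  fixes \<Omega> \<sigma> m_min :: real and M n :: nat
  assumes "\<Omega> > 0" and "M \<ge> 2" and "0 < \<sigma>" and "\<sigma> < m_min" and "n \<ge> 2"
  defines "\<omega> \<equiv> (\<lambda>q::nat. - \<Omega> + (real q - 1) * (2 * \<Omega> / (real M - 1)))"
      and "\<tau> \<equiv> 0.49 * exp (- 3 / 2) / \<Omega> * (\<sigma> / m_min) powr (1 / (2 * real n - 1))"
  shows "\<exists>a ah :: nat \<Rightarrow> complex.
           (\<forall>j\<in>{1..n}. a j \<noteq> 0 \<and> ah j \<noteq> 0) \<and>
           meas_dist_inf M \<omega> n ah (\<lambda>j. real j * \<tau> - \<tau>) a (\<lambda>j. - (real j * \<tau>)) < \<sigma> \<and>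
           (Min ((\<lambda>j. cmod (a j)) ` {1..n}) = m_min \<or> Min ((\<lambda>j. cmod (ah j)) ` {1..n}) = m_min)"
proof -
  define N where "N = 2*n - 1"
  define c where "c = (\<lambda>k. (-1)^k * of_nat ((2*n-1) choose k) :: complex)"
  define m where "m = complex_of_real m_min"
  define ah where "ah = (\<lambda>j. m * c (n+j-1))"
  define a where "a = (\<lambda>j. - m * c (n-j))"
  have n1: "n \<ge> 1" using assms by simp
  have mpos: "m_min > 0" using assms by simp
  have RN: "2 * real n - 1 = real N" using assms by (simp add: N_def of_nat_diff)
  have N1: "N \<ge> 1" using assms by (simp add: N_def)
  have cabs: "cmod (c k) = real ((2*n-1) choose k)" for k
    by (simp add: c_def norm_mult norm_power)
  have na: "cmod (a j) = m_min * real (N choose (n-j))" for j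
    using mpos by (simp add: a_def m_def norm_mult cabs N_def)
  have nah: "cmod (ah j) = m_min * real (N choose (n+j-1))" for j
    using mpos by (simp add: ah_def m_def norm_mult cabs N_def)
  have nz: "\<forall>j\<in>{1..n}. a j \<noteq> 0 \<and> ah j \<noteq> 0"
  proof
    fix j assume j: "j \<in> {1..n}"
    have "N choose (n-j) > 0" "N choose (n+j-1) > 0" using j by (auto simp: N_def)
    hence "cmod (a j) > 0" "cmod (ah j) > 0" using mpos by (auto simp: na nah)
    thus "a j \<noteq> 0 \<and> ah j \<noteq> 0" by auto
  qed
  have minA: "Min ((\<lambda>j. cmod (a j)) ` {1..n}) = m_min"
  proof (rule Min_eqI)
    show "finite ((\<lambda>j. cmod (a j)) ` {1..n})" by simp
    show "m_min \<le> y" if yy: "y \<in> (\<lambda>j. cmod (a j)) ` {1..n}" for y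
    proof -
      obtain j where j: "j \<in> {1..n}" "y = cmod (a j)" using yy by blast
      have "N choose (n-j) \<ge> 1" using j by (auto simp: N_def Suc_le_eq)
      thus ?thesis using j mpos by (simp add: na)
    qed
    show "m_min \<in> (\<lambda>j. cmod (a j)) ` {1..n}"
      using n1 by (intro image_eqI[of _ _ n]) (auto simp: na)
  qed
  define c0 where "c0 = 0.49 * exp (- 3 / 2 :: real)"
  define s where "s = \<sigma> / m_min"
  have s: "0 < s" "s < 1" using assms by (auto simp: s_def)
  have c0: "0 < c0" "c0 < 1"
  proof -
    show "0 < c0" by (simp add: c0_def)
    have "exp (- 3 / 2 :: real) \<le> 1" by simp
    hence "0.49 * exp (- 3 / 2 :: real) \<le> 0.49 * 1" by (intro mult_left_mono) auto
    hence "c0 \<le> 0.49" unfolding c0_def by simp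
    moreover have "(0.49::real) < 1" by simp
    ultimately show "c0 < 1" by linarith
  qed
  have tau: "\<tau> * \<Omega> = c0 * s powr (1 / real N)"
    using assms(1) by (simp add: \<tau>_def c0_def s_def RN)
  have taupos: "\<tau> \<ge> 0" unfolding \<tau>_def using assms(1) by simp
  have tauN: "(\<tau> * \<Omega>)^N < s"
  proof -
    have "(\<tau> * \<Omega>)^N = c0^N * (s powr (1 / real N))^N" by (simp add: tau power_mult_distrib)
    also have "(s powr (1 / real N))^N = s" using s N1 by (simp add: powr_power)
    also have "c0^N * s < 1 * s" using c0 s N1 by (intro mult_strict_right_mono power_less_one_iff[THEN iffD2]) auto
    finally show ?thesis by simp
  qed
  have each: "cmod (dm_fourier n ah (\<lambda>j. real j * \<tau> - \<tau>) (\<omega> q) - dm_fourier n a (\<lambda>j. - (real j * \<tau>)) (\<omega> q)) < \<sigma>"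
    if q: "q \<in> {1..M}" for q
  proof -
    define w where "w = \<omega> q"
    have wb: "\<bar>w\<bar> \<le> \<Omega>" unfolding w_def \<omega>_def using omega_bound[OF assms(1,2) q] .
    define z where "z = exp (\<i> * complex_of_real (\<tau> * w))"
    have z0: "z \<noteq> 0" by (simp add: z_def)
    have zn: "cmod z = 1" by (simp add: z_def)
    have F1: "dm_fourier n ah (\<lambda>j. real j * \<tau> - \<tau>) w = (\<Sum>j=1..n. m * c (n+j-1) * z^(j-1))"
      unfolding dm_fourier_def ah_def
    proof (rule sum.cong)
      fix j assume "j \<in> {1..n}"
      hence "(real j * \<tau> - \<tau>) * w = real (j-1) * (\<tau> * w)" by (simp add: of_nat_diff algebra_simps)
      hence "\<i> * complex_of_real ((real j * \<tau> - \<tau>) * w) = of_nat (j-1) * (\<i> * complex_of_real (\<tau> * w))"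
        by (simp add: algebra_simps)
      hence "exp (\<i> * complex_of_real ((real j * \<tau> - \<tau>) * w)) = exp (of_nat (j-1) * (\<i> * complex_of_real (\<tau> * w)))"
        by (rule arg_cong)
      also have "\<dots> = z ^ (j-1)" by (simp only: exp_of_nat_mult z_def)
      finally show "m * c (n + j - 1) * exp (\<i> * complex_of_real ((real j * \<tau> - \<tau>) * w)) = m * c (n + j - 1) * z ^ (j - 1)"
        by simp
    qed simp
    have F2: "dm_fourier n a (\<lambda>j. - (real j * \<tau>)) w = (\<Sum>j=1..n. (- m * c (n-j)) * inverse z ^ j)"
      unfolding dm_fourier_def a_def
    proof (rule sum.cong)
      fix j assume "j \<in> {1..n}"
      have "\<i> * complex_of_real (- (real j * \<tau>) * w) = - (of_nat j * (\<i> * complex_of_real (\<tau> * w)))"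
        by (simp add: algebra_simps)
      hence "exp (\<i> * complex_of_real (- (real j * \<tau>) * w)) = exp (- (of_nat j * (\<i> * complex_of_real (\<tau> * w))))"
        by (rule arg_cong)
      also have "\<dots> = inverse (exp (of_nat j * (\<i> * complex_of_real (\<tau> * w))))" by (rule exp_minus)
      also have "\<dots> = inverse (z ^ j)" by (simp only: exp_of_nat_mult z_def)
      also have "\<dots> = inverse z ^ j" by (simp add: power_inverse)
      finally show "- m * c (n - j) * exp (\<i> * complex_of_real (- (real j * \<tau>) * w)) = - m * c (n - j) * inverse z ^ j"
        by simp
    qed simp
    have K: "z^n * ((\<Sum>j=1..n. m * c (n+j-1) * z^(j-1)) - (\<Sum>j=1..n. (- m * c (n-j)) * inverse z ^ j))
         = m * (1 - z)^(2*n-1)" unfolding c_def by (rule key[OF z0 n1])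
    have "cmod (dm_fourier n ah (\<lambda>j. real j * \<tau> - \<tau>) w - dm_fourier n a (\<lambda>j. - (real j * \<tau>)) w)
        = cmod (z^n * (dm_fourier n ah (\<lambda>j. real j * \<tau> - \<tau>) w - dm_fourier n a (\<lambda>j. - (real j * \<tau>)) w))"
      by (simp add: norm_mult norm_power zn)
    also have "\<dots> = cmod (m * (1 - z)^(2*n-1))" unfolding F1 F2 K ..
    also have "\<dots> = m_min * cmod (1 - z)^N" using mpos by (simp add: m_def norm_mult norm_power N_def)
    also have "\<dots> \<le> m_min * (\<tau> * \<Omega>)^N"
    proof -
      have "cmod (1 - z) \<le> \<bar>\<tau> * w\<bar>" unfolding z_def by (rule sinb)
      also have "\<dots> \<le> \<tau> * \<Omega>" using taupos wb by (simp add: abs_mult mult_left_mono)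
      finally show ?thesis using mpos by (intro mult_left_mono power_mono) auto
    qed
    also have "\<dots> < m_min * s" using tauN mpos by simp
    also have "\<dots> = \<sigma>" using mpos by (simp add: s_def)
    finally show ?thesis by (simp add: w_def)
  qed
  have dist: "meas_dist_inf M \<omega> n ah (\<lambda>j. real j * \<tau> - \<tau>) a (\<lambda>j. - (real j * \<tau>)) < \<sigma>"
    unfolding meas_dist_inf_def using assms(2) each by (subst Max_less_iff) auto
  show ?thesis using nz dist minA by blast
qed

end
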